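(* Let $\alpha,\beta$ be real constants and $F$ a smooth real function of one variable. Consider the cylindrical Westervelt-type equation $$p_{rr}+\frac{1}{r}p_r+F(p)_{tt}+\alpha p_{ttt}+\beta\Big(p_{rr}+\frac{1}{r}p_r\Big)_t=0$$ for $p(r,t)$, $r>0$. Then every smooth solution satisfies the conservation laws $\partial_rT^r+\partial_tT^t=0$ with $(T^r,T^t)$ given by $$\Big(p-rp_r\ln r+\beta\big(p_t-r\ln(r)\,p_{tr}\big),\ -r\ln(r)\,\big(F'(p)p_t+\alpha p_{tt}\big)\Big),$$ $$\Big(t\big(p-rp_r\ln r+\beta(p_t-r\ln(r)\,p_{tr})\big),\ -r\ln(r)\,\big(t(F'(p)p_t+\alpha p_{tt})-F(p)-\alpha p_t\big)\Big),$$ corresponding to the multipliers $r\ln r$ and $rt\ln r$, respectively.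
   Context: Subscripts denote partial derivatives. *)

theory Defs
  imports "HOL-Analysis.Analysis"
begin

definition Dr :: "(real \<Rightarrow> real \<Rightarrow> real) \<Rightarrow> real \<Rightarrow> real \<Rightarrow> real" where
  "Dr f r t = deriv (\<lambda>s. f s t) r"

definition Dt :: "(real \<Rightarrow> real \<Rightarrow> real) \<Rightarrow> real \<Rightarrow> real \<Rightarrow> real" where
  "Dt f r t = deriv (\<lambda>s. f r s) t"

fun iter_pd :: "bool list \<Rightarrow> (real \<Rightarrow> real \<Rightarrow> real) \<Rightarrow> real \<Rightarrow> real \<Rightarrow> real" where
  "iter_pd [] f = f"
| "iter_pd (b # bs) f = iter_pd bs (if b then Dr f else Dt f)"

definition smooth2_on :: "(real \<times> real) set \<Rightarrow> (real \<Rightarrow> real \<Rightarrow> real) \<Rightarrow> bool" where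
  "smooth2_on U f \<longleftrightarrow>
     (\<forall>bs. \<forall>z\<in>U. (\<lambda>w. iter_pd bs f (fst w) (snd w)) differentiable (at z))"

definition smooth1 :: "(real \<Rightarrow> real) \<Rightarrow> bool" where
  "smooth1 F \<longleftrightarrow> (\<forall>n x. ((deriv ^^ n) F) differentiable (at x))"

end

theory Submission imports Defs begin

abbreviation "UP \<equiv> {z::real\<times>real. fst z > 0}"

lemma sm_Dr: "smooth2_on U q \<Longrightarrow> smooth2_on U (Dr q)"
  unfolding smooth2_on_def
proof (intro allI ballI)
  fix bs z assume "\<forall>bs. \<forall>z\<in>U. (\<lambda>w. iter_pd bs q (fst w) (snd w)) differentiable at z" "z \<in> U"
  then have "(\<lambda>w. iter_pd (True # bs) q (fst w) (snd w)) differentiable at z" by blast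
  then show "(\<lambda>w. iter_pd bs (Dr q) (fst w) (snd w)) differentiable at z" by simp
qed
lemma sm_Dt: "smooth2_on U q \<Longrightarrow> smooth2_on U (Dt q)"
  unfolding smooth2_on_def
proof (intro allI ballI)
  fix bs z assume "\<forall>bs. \<forall>z\<in>U. (\<lambda>w. iter_pd bs q (fst w) (snd w)) differentiable at z" "z \<in> U"
  then have "(\<lambda>w. iter_pd (False # bs) q (fst w) (snd w)) differentiable at z" by blast
  then show "(\<lambda>w. iter_pd bs (Dt q) (fst w) (snd w)) differentiable at z" by simp
qed

lemma sm_diff: "smooth2_on U q \<Longrightarrow> z \<in> U \<Longrightarrow> (\<lambda>w. q (fst w) (snd w)) differentiable (at z)"
  unfolding smooth2_on_def
proof -
  assume "\<forall>bs. \<forall>z\<in>U. (\<lambda>w. iter_pd bs q (fst w) (snd w)) differentiable at z" "z \<in> U"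
  then have "(\<lambda>w. iter_pd [] q (fst w) (snd w)) differentiable at z" by blast
  then show ?thesis by simp
qed

lemma sm_cont: "smooth2_on U q \<Longrightarrow> continuous_on U (\<lambda>w. q (fst w) (snd w))"
  by (rule continuous_at_imp_continuous_on, intro ballI differentiable_imp_continuous_within, erule sm_diff)

lemma sm_dr:
  assumes "smooth2_on UP q" "r > 0"
  shows "((\<lambda>s. q s t) has_real_derivative Dr q r t) (at r)"
proof -
  obtain f' where f': "((\<lambda>w. q (fst w) (snd w)) has_derivative f') (at (r,t))"
    using sm_diff[OF assms(1), of "(r,t)"] assms(2) unfolding differentiable_def by auto
  have "((\<lambda>s. (s,t)) has_derivative (\<lambda>h. (h,0))) (at r)"
    by (auto intro!: derivative_eq_intros)
  from has_derivative_compose[OF this f']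
  have "(\<lambda>s. q s t) differentiable at r" unfolding differentiable_def o_def by auto
  then show ?thesis unfolding Dr_def by (rule iffD2[OF DERIV_deriv_iff_real_differentiable])
qed

lemma sm_dt:
  assumes "smooth2_on UP q" "r > 0"
  shows "((\<lambda>s. q r s) has_real_derivative Dt q r t) (at t)"
proof -
  obtain f' where f': "((\<lambda>w. q (fst w) (snd w)) has_derivative f') (at (r,t))"
    using sm_diff[OF assms(1), of "(r,t)"] assms(2) unfolding differentiable_def by auto
  have "((\<lambda>s. (r,s)) has_derivative (\<lambda>h. (0,h))) (at t)"
    by (auto intro!: derivative_eq_intros)
  from has_derivative_compose[OF this f']
  have "(\<lambda>s. q r s) differentiable at t" unfolding differentiable_def o_def by auto
  then show ?thesis unfolding Dt_def by (rule iffD2[OF DERIV_deriv_iff_real_differentiable])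
qed

lemma schwarz:
  assumes sm: "smooth2_on UP q" and r0: "r0 > 0"
  shows "Dr (Dt q) r0 t0 = Dt (Dr q) r0 t0"
proof -
  define a where "a = t0 - 1"
  define b where "b = t0 + 1"
  have smt: "smooth2_on UP (Dt q)" using sm by (rule sm_Dt)
  have smrt: "smooth2_on UP (Dr (Dt q))" using smt by (rule sm_Dr)
  have contt: "continuous_on UP (\<lambda>w. Dt q (fst w) (snd w))" using smt by (rule sm_cont)
  have contrt: "continuous_on UP (\<lambda>w. Dr (Dt q) (fst w) (snd w))" using smrt by (rule sm_cont)
  have contt1: "continuous_on S (Dt q r)" if "r > 0" for r S
  proof -
    have "continuous_on S (\<lambda>s. (\<lambda>w. Dt q (fst w) (snd w)) (r, s))"
      by (rule continuous_on_compose2[OF contt]) (auto intro!: continuous_intros simp: that)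
    then show ?thesis by simp
  qed
  have contrt1: "continuous_on S (Dr (Dt q) r)" if "r > 0" for r S
  proof -
    have "continuous_on S (\<lambda>s. (\<lambda>w. Dr (Dt q) (fst w) (snd w)) (r, s))"
      by (rule continuous_on_compose2[OF contrt]) (auto intro!: continuous_intros simp: that)
    then show ?thesis by simp
  qed
  have ftc: "q r t - q r a = integral {a..t} (Dt q r)" if "r > 0" "a \<le> t" for r t
  proof -
    have "(Dt q r has_integral (q r t - q r a)) {a..t}"
      by (rule fundamental_theorem_of_calculus[OF that(2)])
         (auto intro!: has_field_derivative_at_within sm_dt[OF sm that(1)] simp: has_real_derivative_iff_has_vector_derivative[symmetric])
    then show ?thesis by (simp add: integral_unique)
  qed
  have step1: "Dr q r0 t - Dr q r0 a = integral {a..t} (Dr (Dt q) r0)" if "a \<le> t" for t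
  proof -
    have L: "((\<lambda>r. integral (cbox a t) (Dt q r)) has_field_derivative integral (cbox a t) (Dr (Dt q) r0)) (at r0 within {0<..})"
    proof (rule leibniz_rule_field_derivative)
      show "((\<lambda>x. Dt q x s) has_field_derivative Dr (Dt q) x s) (at x within {0<..})" if "x \<in> {0<..}" for x s
        using sm_dr[OF smt, of x s] that by (auto intro: has_field_derivative_at_within)
      show "Dt q x integrable_on cbox a t" if "x \<in> {0<..}" for x
        using contt1[of x "{a..t}"] that by (auto intro: integrable_continuous_real)
      show "continuous_on ({0<..} \<times> cbox a t) (\<lambda>(x, y). Dr (Dt q) x y)"
      proof -
        have "continuous_on ({0<..} \<times> cbox a t) (\<lambda>w. Dr (Dt q) (fst w) (snd w))"
          by (rule continuous_on_subset[OF contrt]) auto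
        then show ?thesis by (simp add: case_prod_beta)
      qed
    next
      show "r0 \<in> {0<..}" using r0 by simp
    next
      show "convex {0::real<..}" by (rule convex_real_interval)
    qed
    have atw: "at r0 within {0<..} = at r0" by (rule at_within_open) (use r0 in auto)
    have L': "((\<lambda>r. integral {a..t} (Dt q r)) has_field_derivative integral {a..t} (Dr (Dt q) r0)) (at r0)"
      using L unfolding atw cbox_interval .
    have "((\<lambda>r. q r t - q r a) has_field_derivative Dr q r0 t - Dr q r0 a) (at r0)"
      by (intro DERIV_diff sm_dr[OF sm r0])
    moreover have "((\<lambda>r. q r t - q r a) has_field_derivative integral {a..t} (Dr (Dt q) r0)) (at r0)"
      by (rule has_field_derivative_transform_within_open[OF L', of "{0<..}"]) (use r0 in simp, use r0 in simp, simp add: ftc that)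
    ultimately show ?thesis by (rule DERIV_unique)
  qed
  have I: "((\<lambda>u. integral {a..u} (Dr (Dt q) r0)) has_real_derivative Dr (Dt q) r0 t0) (at t0)"
  proof -
    have "((\<lambda>u. integral {a..u} (Dr (Dt q) r0)) has_real_derivative Dr (Dt q) r0 t0) (at t0 within {a..b})"
      by (rule integral_has_real_derivative) (rule contrt1[OF r0], simp add: a_def b_def)
    moreover have "at t0 within {a..b} = at t0" by (rule at_within_Icc_at) (simp_all add: a_def b_def)
    ultimately show ?thesis by simp
  qed
  have D: "((\<lambda>u. Dr q r0 a + integral {a..u} (Dr (Dt q) r0)) has_real_derivative Dr (Dt q) r0 t0) (at t0)"
    using DERIV_add[OF DERIV_const I] by simp
  have eqs: "Dr q r0 a + integral {a..x} (Dr (Dt q) r0) = Dr q r0 x" if "x \<in> {a<..}" for x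
    using step1[of x] that by simp
  have "((\<lambda>u. Dr q r0 u) has_real_derivative Dr (Dt q) r0 t0) (at t0)"
  proof (rule has_field_derivative_transform_within_open[OF D])
    show "open {a<..}" by simp
    show "t0 \<in> {a<..}" by (simp add: a_def)
  qed (rule eqs)
  then show ?thesis unfolding Dt_def[of "Dr q"] by (rule DERIV_imp_deriv[symmetric])
qed


lemma Dr_eqI: "((\<lambda>s. f s t) has_real_derivative D) (at r) \<Longrightarrow> Dr f r t = D"
  unfolding Dr_def by (rule DERIV_imp_deriv)
lemma Dt_eqI: "((\<lambda>s. f r s) has_real_derivative D) (at t) \<Longrightarrow> Dt f r t = D"
  unfolding Dt_def by (rule DERIV_imp_deriv)

theorem mainTheorem8:
  fixes \<alpha> \<beta> :: real and F :: "real \<Rightarrow> real" and p :: "real \<Rightarrow> real \<Rightarrow> real"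
  assumes F_smooth: "smooth1 F"
    and p_smooth: "smooth2_on {z. fst z > 0} p"
    and eq: "\<And>r t. r > 0 \<Longrightarrow>
        Dr (Dr p) r t + (1 / r) * Dr p r t
      + Dt (Dt (\<lambda>r t. F (p r t))) r t
      + \<alpha> * Dt (Dt (Dt p)) r t
      + \<beta> * Dt (\<lambda>r t. Dr (Dr p) r t + (1 / r) * Dr p r t) r t = 0"
  defines "T1r \<equiv> \<lambda>r t. p r t - r * Dr p r t * ln r
                      + \<beta> * (Dt p r t - r * ln r * Dr (Dt p) r t)"
    and "T1t \<equiv> \<lambda>r t. - r * ln r * (deriv F (p r t) * Dt p r t + \<alpha> * Dt (Dt p) r t)"
    and "T2r \<equiv> \<lambda>r t. t * (p r t - r * Dr p r t * ln r
                      + \<beta> * (Dt p r t - r * ln r * Dr (Dt p) r t))"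
    and "T2t \<equiv> \<lambda>r t. - r * ln r * (t * (deriv F (p r t) * Dt p r t + \<alpha> * Dt (Dt p) r t)
                      - F (p r t) - \<alpha> * Dt p r t)"
  shows "\<forall>r t. r > 0 \<longrightarrow> Dr T1r r t + Dt T1t r t = 0 \<and> Dr T2r r t + Dt T2t r t = 0"
proof (intro allI impI)
  fix r t :: real
  assume r: "r > 0"
  have sp: "smooth2_on UP p" using p_smooth .
  have sPr: "smooth2_on UP (Dr p)" using sp by (rule sm_Dr)
  have sPt: "smooth2_on UP (Dt p)" using sp by (rule sm_Dt)
  have sPrr: "smooth2_on UP (Dr (Dr p))" using sPr by (rule sm_Dr)
  have sPtr: "smooth2_on UP (Dr (Dt p))" using sPt by (rule sm_Dr)
  have sPtt: "smooth2_on UP (Dt (Dt p))" using sPt by (rule sm_Dt)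
  have F0: "F differentiable at x" for x
  proof -
    have "((deriv ^^ 0) F) differentiable at x" using F_smooth unfolding smooth1_def by blast
    then show ?thesis by simp
  qed
  have F1: "deriv F differentiable at x" for x
  proof -
    have "((deriv ^^ 1) F) differentiable at x" using F_smooth unfolding smooth1_def by blast
    then show ?thesis by simp
  qed
  have dF: "(F has_real_derivative deriv F x) (at x)" for x
    using F0 by (rule iffD2[OF DERIV_deriv_iff_real_differentiable])
  have dF1: "(deriv F has_real_derivative deriv (deriv F) x) (at x)" for x
    using F1 by (rule iffD2[OF DERIV_deriv_iff_real_differentiable])
  have r_p: "((\<lambda>s. p s t) has_real_derivative Dr p r t) (at r)" by (rule sm_dr[OF sp r])
  have r_Pr: "((\<lambda>s. Dr p s t) has_real_derivative Dr (Dr p) r t) (at r)" by (rule sm_dr[OF sPr r])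
  have r_Pt: "((\<lambda>s. Dt p s t) has_real_derivative Dr (Dt p) r t) (at r)" by (rule sm_dr[OF sPt r])
  have r_Ptr: "((\<lambda>s. Dr (Dt p) s t) has_real_derivative Dr (Dr (Dt p)) r t) (at r)" by (rule sm_dr[OF sPtr r])
  have t_p: "\<And>s. (p r has_real_derivative Dt p r s) (at s)" by (rule sm_dt[OF sp r])
  have t_Pt: "\<And>s. (Dt p r has_real_derivative Dt (Dt p) r s) (at s)" by (rule sm_dt[OF sPt r])
  have t_Ptt: "\<And>s. (Dt (Dt p) r has_real_derivative Dt (Dt (Dt p)) r s) (at s)" by (rule sm_dt[OF sPtt r])
  have t_Pr: "\<And>s. (Dr p r has_real_derivative Dt (Dr p) r s) (at s)" by (rule sm_dt[OF sPr r])
  have t_Prr: "\<And>s. (Dr (Dr p) r has_real_derivative Dt (Dr (Dr p)) r s) (at s)" by (rule sm_dt[OF sPrr r])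
  have m1: "Dt (Dr p) r t = Dr (Dt p) r t" using schwarz[OF sp r] by simp
  have m2: "Dt (Dr (Dr p)) r t = Dr (Dr (Dt p)) r t"
  proof -
    have "Dt (Dr (Dr p)) r t = Dr (Dt (Dr p)) r t" using schwarz[OF sPr r] by simp
    also have "\<dots> = Dr (Dr (Dt p)) r t"
      unfolding Dr_def[of "Dt (Dr p)"] Dr_def[of "Dr (Dt p)"]
    proof (rule deriv_cong_ev)
      have "eventually (\<lambda>s. s \<in> {0<..}) (nhds r)" using r by (intro eventually_nhds_in_open) auto
      then show "eventually (\<lambda>s. Dt (Dr p) s t = Dr (Dt p) s t) (nhds r)"
        by eventually_elim (use schwarz[OF sp] in simp)
    qed simp
    finally show ?thesis .
  qed
  have FPt: "Dt (\<lambda>r t. F (p r t)) r = (\<lambda>s. deriv F (p r s) * Dt p r s)"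
  proof
    fix s
    have "((\<lambda>u. F (p r u)) has_real_derivative deriv F (p r s) * Dt p r s) (at s)"
      by (rule DERIV_chain2[OF dF t_p])
    then show "Dt (\<lambda>r t. F (p r t)) r s = deriv F (p r s) * Dt p r s"
      unfolding Dt_def by (rule DERIV_imp_deriv)
  qed
  have t_F1: "((\<lambda>s. deriv F (p r s)) has_real_derivative deriv (deriv F) (p r t) * Dt p r t) (at t)"
    by (rule DERIV_chain2[OF dF1 t_p])
  have t_F: "((\<lambda>s. F (p r s)) has_real_derivative deriv F (p r t) * Dt p r t) (at t)"
    by (rule DERIV_chain2[OF dF t_p])
  have FPtt: "Dt (Dt (\<lambda>r t. F (p r t))) r t
      = deriv (deriv F) (p r t) * Dt p r t * Dt p r t + deriv F (p r t) * Dt (Dt p) r t"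
    unfolding Dt_def[of "Dt (\<lambda>r t. F (p r t))"] FPt
    by (rule DERIV_imp_deriv) (auto intro!: derivative_eq_intros t_F1 t_Pt)
  have Lt: "Dt (\<lambda>r t. Dr (Dr p) r t + (1 / r) * Dr p r t) r t
      = Dr (Dr (Dt p)) r t + (1 / r) * Dr (Dt p) r t"
    unfolding Dt_def[of "\<lambda>r t. Dr (Dr p) r t + (1 / r) * Dr p r t"] m1[symmetric] m2[symmetric]
    by (rule DERIV_imp_deriv) (use r in \<open>auto intro!: derivative_eq_intros t_Prr t_Pr\<close>)
  have E: "Dr (Dr p) r t + (1 / r) * Dr p r t
      + (deriv (deriv F) (p r t) * Dt p r t * Dt p r t + deriv F (p r t) * Dt (Dt p) r t)
      + \<alpha> * Dt (Dt (Dt p)) r t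
      + \<beta> * (Dr (Dr (Dt p)) r t + (1 / r) * Dr (Dt p) r t) = 0"
    using eq[OF r, of t] unfolding FPtt Lt .
  have D1r: "Dr T1r r t = - ln r * Dr p r t - r * ln r * Dr (Dr p) r t
      - \<beta> * ln r * Dr (Dt p) r t - \<beta> * r * ln r * Dr (Dr (Dt p)) r t"
    unfolding T1r_def
    by (rule Dr_eqI) (use r in \<open>auto intro!: derivative_eq_intros r_p r_Pr r_Pt r_Ptr simp: field_simps\<close>)
  have D1t: "Dt T1t r t = - r * ln r * (deriv (deriv F) (p r t) * Dt p r t * Dt p r t
      + deriv F (p r t) * Dt (Dt p) r t + \<alpha> * Dt (Dt (Dt p)) r t)"
    unfolding T1t_def
    by (rule Dt_eqI) (auto intro!: derivative_eq_intros t_F1 t_Pt t_Ptt simp: algebra_simps)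
  have D2r: "Dr T2r r t = t * Dr T1r r t"
    unfolding D1r T2r_def
    by (rule Dr_eqI) (use r in \<open>auto intro!: derivative_eq_intros r_p r_Pr r_Pt r_Ptr simp: field_simps\<close>)
  have D2t: "Dt T2t r t = t * (- r * ln r * (deriv (deriv F) (p r t) * Dt p r t * Dt p r t
      + deriv F (p r t) * Dt (Dt p) r t + \<alpha> * Dt (Dt (Dt p)) r t))"
    unfolding T2t_def
    by (rule Dt_eqI) (auto intro!: derivative_eq_intros t_F1 t_F t_p t_Pt t_Ptt simp: algebra_simps)
  have S1: "Dr T1r r t + Dt T1t r t = - (r * ln r) * (Dr (Dr p) r t + (1 / r) * Dr p r t
      + (deriv (deriv F) (p r t) * Dt p r t * Dt p r t + deriv F (p r t) * Dt (Dt p) r t)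
      + \<alpha> * Dt (Dt (Dt p)) r t
      + \<beta> * (Dr (Dr (Dt p)) r t + (1 / r) * Dr (Dt p) r t))"
    unfolding D1r D1t using r by (simp add: field_simps)
  have Z1: "Dr T1r r t + Dt T1t r t = 0" unfolding S1 E by simp
  moreover have "Dr T2r r t + Dt T2t r t = 0"
    unfolding D2r D2t D1t[symmetric] using Z1 by (simp add: distrib_left[symmetric])
  ultimately show "Dr T1r r t + Dt T1t r t = 0 \<and> Dr T2r r t + Dt T2t r t = 0" by simp
qed

end
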